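(* Let $\mathcal M=(\mathbf M^{(\lambda)})_{\lambda>0}$ be a weight matrix on $\mathbb N_0^d$. (i) If for every $\lambda>0$ there exist $0<\kappa\le\lambda$ and $A\ge1$ with $M^{(\kappa)}_{\alpha+e_j}\le A^{|\alpha|+1}M^{(\lambda)}_\alpha$ for all $\alpha\in\mathbb N_0^d$, $1\le j\le d$, then for every $\lambda>0$ and $N\in\mathbb N$ there exist $0<\kappa\le\lambda$ and $A,B\ge1$ such that $$\omega_{\mathbf M^{(\lambda)}}(t)+N\log|t|\le\omega_{\mathbf M^{(\kappa)}}(At)+B\quad\text{for all }t\in\mathbb R^d\setminus\{0\}.$$ (ii) If for every $\lambda>0$ there exist $\kappa\ge\lambda$ and $A\ge1$ with $M^{(\lambda)}_{\alpha+e_j}\le A^{|\alpha|+1}M^{(\kappa)}_\alpha$ for all $\alpha\in\mathbb N_0^d$, $1\le j\le d$, then for every $\lambda>0$ and $N\in\mathbb N$ there exist $\kappa\ge\lambda$ and $A,B\ge1$ such that $$\omega_{\mathbf M^{(\kappa)}}(t)+N\log|t|\le\omega_{\mathbf M^{(\lambda)}}(At)+B\quad\text{for all }t\in\mathbb R^d\setminus\{0\}.$$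
   Context: A weight matrix is a family $\mathcal M=(\mathbf M^{(\lambda)})_{\lambda>0}$ with $\mathbf M^{(\lambda)}=(M^{(\lambda)}_\alpha)_{\alpha\in\mathbb N_0^d}$ sequences of positive reals, $M^{(\lambda)}_0=1$, and $M^{(\lambda)}_\alpha\le M^{(\kappa)}_\alpha$ for all $\alpha$ whenever $0<\lambda\le\kappa$. $e_j$ is the $j$-th unit vector, $|\alpha|=\sum\alpha_j$, $|t|$ the Euclidean norm. The associated weight function of $\mathbf M=(M_\alpha)$ is $\omega_{\mathbf M}(t)=\sup_{\alpha\in\mathbb N^d_{0,t}}\log\frac{|t^\alpha|}{M_\alpha}$ ($t\in\mathbb R^d$, possibly $+\infty$), where $\mathbb N^d_{0,t}=\{\alpha:\alpha_j=0\text{ whenever }t_j=0\}$ and $0^0:=1$. *)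

theory Defs
  imports "HOL-Analysis.Analysis" "HOL-Library.Extended_Real"
begin

(* Multi-indices in N_0^d are functions 'n => nat for a finite index type 'n (d = CARD('n));
   points of R^d are real^'n. A weight matrix is M :: real => multi-index => real,
   M l = the sequence M^(l), meaningful for l > 0. *)

definition weight_matrix :: "(real \<Rightarrow> ('n::finite \<Rightarrow> nat) \<Rightarrow> real) \<Rightarrow> bool" where
  "weight_matrix M \<longleftrightarrow>
     (\<forall>l>0. (\<forall>\<alpha>. M l \<alpha> > 0) \<and> M l (\<lambda>_. 0) = 1) \<and>
     (\<forall>l k \<alpha>. 0 < l \<longrightarrow> l \<le> k \<longrightarrow> M l \<alpha> \<le> M k \<alpha>)"

definition mi_len :: "('n::finite \<Rightarrow> nat) \<Rightarrow> nat" where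
  "mi_len \<alpha> = (\<Sum>j\<in>UNIV. \<alpha> j)"

definition mi_succ :: "('n::finite \<Rightarrow> nat) \<Rightarrow> 'n \<Rightarrow> ('n \<Rightarrow> nat)" where
  "mi_succ \<alpha> j = \<alpha>(j := \<alpha> j + 1)"

definition mi_supp_set :: "real^'n \<Rightarrow> ('n::finite \<Rightarrow> nat) set" where
  "mi_supp_set t = {\<alpha>. \<forall>j. t $ j = 0 \<longrightarrow> \<alpha> j = 0}"

(* associated weight function, possibly +infinity; 0^0 = 1 in Isabelle *)
definition assoc_weight :: "(('n::finite \<Rightarrow> nat) \<Rightarrow> real) \<Rightarrow> real^'n \<Rightarrow> ereal" where
  "assoc_weight Ms t =
     (SUP \<alpha> \<in> mi_supp_set t. ereal (ln ((\<Prod>j\<in>UNIV. \<bar>t $ j\<bar> ^ \<alpha> j) / Ms \<alpha>)))"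

end

theory Submission
  imports Defs
begin

lemma prod_upd:
  fixes g :: "'n::finite \<Rightarrow> real"
  shows "(\<Prod>i\<in>UNIV. g i ^ (mi_succ \<alpha> j) i) = g j * (\<Prod>i\<in>UNIV. g i ^ \<alpha> i)"
proof -
  have "(\<Prod>i\<in>UNIV. g i ^ (mi_succ \<alpha> j) i) = g j ^ (\<alpha> j + 1) * (\<Prod>i\<in>UNIV-{j}. g i ^ (mi_succ \<alpha> j) i)"
    by (subst prod.remove[of UNIV j]) (auto simp: mi_succ_def)
  also have "(\<Prod>i\<in>UNIV-{j}. g i ^ (mi_succ \<alpha> j) i) = (\<Prod>i\<in>UNIV-{j}. g i ^ \<alpha> i)"
    by (rule prod.cong) (auto simp: mi_succ_def)
  also have "g j ^ (\<alpha> j + 1) * (\<Prod>i\<in>UNIV-{j}. g i ^ \<alpha> i) = g j * (g j ^ \<alpha> j * (\<Prod>i\<in>UNIV-{j}. g i ^ \<alpha> i))"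
    by simp
  also have "g j ^ \<alpha> j * (\<Prod>i\<in>UNIV-{j}. g i ^ \<alpha> i) = (\<Prod>i\<in>UNIV. g i ^ \<alpha> i)"
    by (subst prod.remove[of UNIV j]) auto
  finally show ?thesis .
qed

lemma len_succ: "mi_len (mi_succ \<alpha> j) = mi_len \<alpha> + 1"
proof -
  have "mi_len (mi_succ \<alpha> j) = (\<alpha> j + 1) + (\<Sum>i\<in>UNIV-{j}. mi_succ \<alpha> j i)"
    unfolding mi_len_def by (subst sum.remove[of UNIV j]) (auto simp: mi_succ_def)
  also have "(\<Sum>i\<in>UNIV-{j}. mi_succ \<alpha> j i) = (\<Sum>i\<in>UNIV-{j}. \<alpha> i)"
    by (rule sum.cong) (auto simp: mi_succ_def)
  also have "\<alpha> j + 1 + (\<Sum>i\<in>UNIV-{j}. \<alpha> i) = mi_len \<alpha> + 1"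
    unfolding mi_len_def by (subst sum.remove[of UNIV j]) auto
  finally show ?thesis .
qed

lemma one_step:
  fixes P Q :: "('n::finite \<Rightarrow> nat) \<Rightarrow> real" and t :: "real^'n"
  assumes Ppos: "\<forall>\<alpha>. P \<alpha> > 0" and Qpos: "\<forall>\<alpha>. Q \<alpha> > 0" and A: "A \<ge> 1"
    and H: "\<forall>\<alpha> j. Q (mi_succ \<alpha> j) \<le> A ^ (mi_len \<alpha> + 1) * P \<alpha>" and t: "t \<noteq> 0"
  shows "assoc_weight P t + ereal (ln (norm t)) \<le> assoc_weight Q (A *\<^sub>R t) + ereal (ln (real CARD('n)))"
proof -
  define m where "m = Max (range (\<lambda>i. \<bar>t$i\<bar>))"
  have "m \<in> range (\<lambda>i. \<bar>t$i\<bar>)" unfolding m_def by (rule Max_in) auto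
  then obtain j where mj: "m = \<bar>t$j\<bar>" by auto
  have jmax: "\<bar>t$i\<bar> \<le> \<bar>t$j\<bar>" for i unfolding mj[symmetric] m_def by (rule Max_ge) auto
  have tj: "t$j \<noteq> 0"
  proof
    assume "t$j = 0"
    then have "\<forall>i. t$i = 0" using jmax by (metis abs_le_zero_iff abs_zero)
    then show False using t by (simp add: vec_eq_iff)
  qed
  define c where "c = real CARD('n)"
  have c1: "c \<ge> 1" unfolding c_def by (simp add: Suc_le_eq)
  have nt: "norm t \<le> c * \<bar>t$j\<bar>"
  proof -
    have "norm t \<le> (\<Sum>i\<in>UNIV. \<bar>t$i\<bar>)" by (rule norm_le_l1_cart)
    also have "\<dots> \<le> c * \<bar>t$j\<bar>"
      using jmax sum_bounded_above[of UNIV "\<lambda>i. \<bar>t$i\<bar>" "\<bar>t$j\<bar>"] by (simp add: c_def)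
    finally show ?thesis .
  qed
  have ntpos: "norm t > 0" using t by simp
  have A0: "A > 0" using A by simp
  have ne: "mi_supp_set t \<noteq> {}" unfolding mi_supp_set_def by auto
  have "assoc_weight P t + ereal (ln (norm t)) =
     (SUP \<alpha> \<in> mi_supp_set t. ereal (ln ((\<Prod>i\<in>UNIV. \<bar>t $ i\<bar> ^ \<alpha> i) / P \<alpha>)) + ereal (ln (norm t)))"
    unfolding assoc_weight_def by (rule SUP_ereal_add_left[symmetric]) (use ne in auto)
  also have "\<dots> \<le> assoc_weight Q (A *\<^sub>R t) + ereal (ln c)"
  proof (rule SUP_least)
    fix \<alpha> assume \<alpha>: "\<alpha> \<in> mi_supp_set t"
    define \<beta> where "\<beta> = mi_succ \<alpha> j"
    define p where "p = (\<Prod>i\<in>UNIV. \<bar>t $ i\<bar> ^ \<alpha> i)"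
    have ppos: "p > 0" unfolding p_def
      by (rule prod_pos) (use \<alpha> in \<open>auto simp: mi_supp_set_def\<close>)
    have \<beta>s: "\<beta> \<in> mi_supp_set (A *\<^sub>R t)"
      using \<alpha> tj A0 by (auto simp: mi_supp_set_def \<beta>_def mi_succ_def)
    have q: "(\<Prod>i\<in>UNIV. \<bar>(A *\<^sub>R t) $ i\<bar> ^ \<beta> i) = A ^ (mi_len \<alpha> + 1) * (\<bar>t$j\<bar> * p)"
    proof -
      have "(\<Prod>i\<in>UNIV. \<bar>(A *\<^sub>R t) $ i\<bar> ^ \<beta> i) = (\<Prod>i\<in>UNIV. A ^ \<beta> i * \<bar>t $ i\<bar> ^ \<beta> i)"
        using A0 by (intro prod.cong) (auto simp: abs_mult power_mult_distrib)
      also have "\<dots> = (\<Prod>i\<in>UNIV. A ^ \<beta> i) * (\<Prod>i\<in>UNIV. \<bar>t $ i\<bar> ^ \<beta> i)"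
        by (rule prod.distrib)
      also have "(\<Prod>i\<in>UNIV. A ^ \<beta> i) = A ^ mi_len \<beta>"
        unfolding mi_len_def by (rule power_sum[symmetric])
      also have "mi_len \<beta> = mi_len \<alpha> + 1" unfolding \<beta>_def by (rule len_succ)
      also have "(\<Prod>i\<in>UNIV. \<bar>t $ i\<bar> ^ \<beta> i) = \<bar>t$j\<bar> * p"
        unfolding \<beta>_def p_def by (rule prod_upd)
      finally show ?thesis .
    qed
    have Qb: "Q \<beta> \<le> A ^ (mi_len \<alpha> + 1) * P \<alpha>" using H \<beta>_def by simp
    have Qbp: "Q \<beta> > 0" "P \<alpha> > 0" using Qpos Ppos by auto
    have tjp: "\<bar>t$j\<bar> > 0" using tj by simp
    have key: "p * norm t / P \<alpha> \<le> A ^ (mi_len \<alpha> + 1) * (\<bar>t$j\<bar> * p) * c / Q \<beta>"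
    proof -
      have "p * norm t / P \<alpha> \<le> p * (c * \<bar>t$j\<bar>) / P \<alpha>"
        using nt ppos Qbp by (intro divide_right_mono mult_left_mono) auto
      also have "\<dots> = A ^ (mi_len \<alpha> + 1) * (\<bar>t$j\<bar> * p) * c / (A ^ (mi_len \<alpha> + 1) * P \<alpha>)"
        using A0 by (simp add: field_simps)
      also have "\<dots> \<le> A ^ (mi_len \<alpha> + 1) * (\<bar>t$j\<bar> * p) * c / Q \<beta>"
        using Qb Qbp ppos tjp c1 A0 by (intro divide_left_mono) auto
      finally show ?thesis .
    qed
    have "ln (p / P \<alpha>) + ln (norm t) = ln (p * norm t / P \<alpha>)"
      using ppos Qbp ntpos by (simp add: ln_mult ln_div)
    also have "\<dots> \<le> ln (A ^ (mi_len \<alpha> + 1) * (\<bar>t$j\<bar> * p) * c / Q \<beta>)"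
      using key ppos Qbp ntpos by (intro ln_mono) auto
    also have "\<dots> = ln (A ^ (mi_len \<alpha> + 1) * (\<bar>t$j\<bar> * p) / Q \<beta>) + ln c"
      using ppos Qbp tjp c1 A0 by (simp add: ln_mult ln_div)
    finally have r: "ln (p / P \<alpha>) + ln (norm t) \<le> ln (A ^ (mi_len \<alpha> + 1) * (\<bar>t$j\<bar> * p) / Q \<beta>) + ln c" .
    have "ereal (ln (p / P \<alpha>)) + ereal (ln (norm t)) \<le> ereal (ln (A ^ (mi_len \<alpha> + 1) * (\<bar>t$j\<bar> * p) / Q \<beta>)) + ereal (ln c)"
      using r by simp
    also have "\<dots> \<le> assoc_weight Q (A *\<^sub>R t) + ereal (ln c)"
      unfolding assoc_weight_def
      by (rule add_right_mono, rule SUP_upper2[OF \<beta>s]) (simp only: q order_refl)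
    finally show "ereal (ln ((\<Prod>i\<in>UNIV. \<bar>t $ i\<bar> ^ \<alpha> i) / P \<alpha>)) + ereal (ln (norm t)) \<le> assoc_weight Q (A *\<^sub>R t) + ereal (ln c)"
      unfolding p_def .
  qed
  finally show ?thesis unfolding c_def .
qed
lemma card_ln_ge0: "ln (real CARD('n::finite)) \<ge> 0"
  by (simp add: Suc_le_eq)

lemma iter_i:
  fixes M :: "real \<Rightarrow> ('n::finite \<Rightarrow> nat) \<Rightarrow> real"
  assumes wm: "weight_matrix M"
    and H: "\<forall>l>0. \<exists>k A. 0 < k \<and> k \<le> l \<and> A \<ge> 1 \<and>
        (\<forall>\<alpha> j. M k (mi_succ \<alpha> j) \<le> A ^ (mi_len \<alpha> + 1) * M l \<alpha>)"
  shows "\<forall>l>0. \<exists>k A B. 0 < k \<and> k \<le> l \<and> A \<ge> 1 \<and> B \<ge> 1 \<and>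
        (\<forall>t::real^'n. t \<noteq> 0 \<longrightarrow>
           assoc_weight (M l) t + ereal (real N * ln (norm t))
             \<le> assoc_weight (M k) (A *\<^sub>R t) + ereal B)"
proof (induction N)
  case 0
  show ?case
  proof (intro allI impI)
    fix l :: real assume "l > 0"
    show "\<exists>k A B. 0 < k \<and> k \<le> l \<and> A \<ge> 1 \<and> B \<ge> 1 \<and>
        (\<forall>t::real^'n. t \<noteq> 0 \<longrightarrow>
           assoc_weight (M l) t + ereal (real 0 * ln (norm t))
             \<le> assoc_weight (M k) (A *\<^sub>R t) + ereal B)"
    proof (rule exI[of _ l], rule exI[of _ "1::real"], rule exI[of _ "1::real"], intro conjI allI impI)
      fix t :: "real^'n"
      have "assoc_weight (M l) t + ereal 0 \<le> assoc_weight (M l) t + ereal 1"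
        by (rule add_left_mono) simp
      then show "assoc_weight (M l) t + ereal (real 0 * ln (norm t)) \<le> assoc_weight (M l) (1 *\<^sub>R t) + ereal 1"
        by simp
    qed (use \<open>0 < l\<close> in auto)
  qed
next
  case (Suc N)
  show ?case
  proof (intro allI impI)
    fix l :: real assume l: "l > 0"
    obtain k1 A1 where k1: "0 < k1" "k1 \<le> l" "A1 \<ge> 1"
      and h1: "\<forall>\<alpha> j. M k1 (mi_succ \<alpha> j) \<le> A1 ^ (mi_len \<alpha> + 1) * M l \<alpha>"
      using H l by blast
    obtain k2 A2 B2 where k2: "0 < k2" "k2 \<le> k1" "A2 \<ge> 1" "B2 \<ge> 1"
      and h2: "\<forall>t::real^'n. t \<noteq> 0 \<longrightarrow>
           assoc_weight (M k1) t + ereal (real N * ln (norm t))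
             \<le> assoc_weight (M k2) (A2 *\<^sub>R t) + ereal B2"
      using Suc k1 by blast
    have pos: "\<forall>\<alpha>. M x \<alpha> > 0" if "x > 0" for x using wm that by (auto simp: weight_matrix_def)
    define c where "c = ln (real CARD('n))"
    have c0: "c \<ge> 0" unfolding c_def by (rule card_ln_ge0)
    show "\<exists>k A B. 0 < k \<and> k \<le> l \<and> A \<ge> 1 \<and> B \<ge> 1 \<and>
        (\<forall>t::real^'n. t \<noteq> 0 \<longrightarrow>
           assoc_weight (M l) t + ereal (real (Suc N) * ln (norm t))
             \<le> assoc_weight (M k) (A *\<^sub>R t) + ereal B)"
    proof (rule exI[of _ k2], rule exI[of _ "A2 * A1"], rule exI[of _ "B2 + c"], intro conjI allI impI)
      show "1 \<le> A2 * A1" using k1 k2 by (metis mult_mono' mult_1 zero_le_one)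
      fix t :: "real^'n" assume t: "t \<noteq> 0"
      have s1: "assoc_weight (M l) t + ereal (ln (norm t)) \<le> assoc_weight (M k1) (A1 *\<^sub>R t) + ereal c"
        unfolding c_def by (rule one_step[OF pos[OF l] pos[OF k1(1)] k1(3) h1 t])
      have A1t: "A1 *\<^sub>R t \<noteq> 0" using t k1 by simp
      have lnle: "real N * ln (norm t) \<le> real N * ln (norm (A1 *\<^sub>R t))"
        using t k1 by (intro mult_left_mono) (auto simp: ln_mult)
      have "assoc_weight (M l) t + ereal (real (Suc N) * ln (norm t))
          = (assoc_weight (M l) t + ereal (ln (norm t))) + ereal (real N * ln (norm t))"
        by (simp add: algebra_simps add.assoc)
      also have "\<dots> \<le> (assoc_weight (M k1) (A1 *\<^sub>R t) + ereal c) + ereal (real N * ln (norm (A1 *\<^sub>R t)))"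
        by (rule add_mono[OF s1]) (use lnle in simp)
      also have "\<dots> = (assoc_weight (M k1) (A1 *\<^sub>R t) + ereal (real N * ln (norm (A1 *\<^sub>R t)))) + ereal c"
        by (simp add: ac_simps)
      also have "\<dots> \<le> (assoc_weight (M k2) (A2 *\<^sub>R (A1 *\<^sub>R t)) + ereal B2) + ereal c"
        by (rule add_right_mono[OF h2[rule_format, OF A1t]])
      also have "\<dots> = assoc_weight (M k2) ((A2 * A1) *\<^sub>R t) + ereal (B2 + c)"
        by (simp add: add.assoc)
      finally show "assoc_weight (M l) t + ereal (real (Suc N) * ln (norm t))
             \<le> assoc_weight (M k2) ((A2 * A1) *\<^sub>R t) + ereal (B2 + c)" .
    qed (use k1 k2 c0 in auto)
  qed
qed

lemma iter_ii:
  fixes M :: "real \<Rightarrow> ('n::finite \<Rightarrow> nat) \<Rightarrow> real"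
  assumes wm: "weight_matrix M"
    and H: "\<forall>l>0. \<exists>k A. k \<ge> l \<and> A \<ge> 1 \<and>
        (\<forall>\<alpha> j. M l (mi_succ \<alpha> j) \<le> A ^ (mi_len \<alpha> + 1) * M k \<alpha>)"
  shows "\<forall>l>0. \<exists>k A B. k \<ge> l \<and> A \<ge> 1 \<and> B \<ge> 1 \<and>
        (\<forall>t::real^'n. t \<noteq> 0 \<longrightarrow>
           assoc_weight (M k) t + ereal (real N * ln (norm t))
             \<le> assoc_weight (M l) (A *\<^sub>R t) + ereal B)"
proof (induction N)
  case 0
  show ?case
  proof (intro allI impI)
    fix l :: real assume "l > 0"
    show "\<exists>k A B. k \<ge> l \<and> A \<ge> 1 \<and> B \<ge> 1 \<and>
        (\<forall>t::real^'n. t \<noteq> 0 \<longrightarrow>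
           assoc_weight (M k) t + ereal (real 0 * ln (norm t))
             \<le> assoc_weight (M l) (A *\<^sub>R t) + ereal B)"
    proof (rule exI[of _ l], rule exI[of _ "1::real"], rule exI[of _ "1::real"], intro conjI allI impI)
      fix t :: "real^'n"
      have "assoc_weight (M l) t + ereal 0 \<le> assoc_weight (M l) t + ereal 1"
        by (rule add_left_mono) simp
      then show "assoc_weight (M l) t + ereal (real 0 * ln (norm t)) \<le> assoc_weight (M l) (1 *\<^sub>R t) + ereal 1"
        by simp
    qed (use \<open>0 < l\<close> in auto)
  qed
next
  case (Suc N)
  show ?case
  proof (intro allI impI)
    fix l :: real assume l: "l > 0"
    obtain k1 A1 where k1: "k1 \<ge> l" "A1 \<ge> 1"
      and h1: "\<forall>\<alpha> j. M l (mi_succ \<alpha> j) \<le> A1 ^ (mi_len \<alpha> + 1) * M k1 \<alpha>"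
      using H l by blast
    have k1p: "k1 > 0" using k1 l by simp
    obtain k2 A2 B2 where k2: "k2 \<ge> k1" "A2 \<ge> 1" "B2 \<ge> 1"
      and h2: "\<forall>t::real^'n. t \<noteq> 0 \<longrightarrow>
           assoc_weight (M k2) t + ereal (real N * ln (norm t))
             \<le> assoc_weight (M k1) (A2 *\<^sub>R t) + ereal B2"
      using Suc k1p by blast
    have pos: "\<forall>\<alpha>. M x \<alpha> > 0" if "x > 0" for x using wm that by (auto simp: weight_matrix_def)
    define c where "c = ln (real CARD('n))"
    have c0: "c \<ge> 0" unfolding c_def by (rule card_ln_ge0)
    show "\<exists>k A B. k \<ge> l \<and> A \<ge> 1 \<and> B \<ge> 1 \<and>
        (\<forall>t::real^'n. t \<noteq> 0 \<longrightarrow>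
           assoc_weight (M k) t + ereal (real (Suc N) * ln (norm t))
             \<le> assoc_weight (M l) (A *\<^sub>R t) + ereal B)"
    proof (rule exI[of _ k2], rule exI[of _ "A1 * A2"], rule exI[of _ "B2 + c"], intro conjI allI impI)
      show "1 \<le> A1 * A2" using k1 k2 by (metis mult_mono' mult_1 zero_le_one)
      fix t :: "real^'n" assume t: "t \<noteq> 0"
      have A2t: "A2 *\<^sub>R t \<noteq> 0" using t k2 by simp
      have s1: "assoc_weight (M k1) (A2 *\<^sub>R t) + ereal (ln (norm (A2 *\<^sub>R t)))
          \<le> assoc_weight (M l) (A1 *\<^sub>R (A2 *\<^sub>R t)) + ereal c"
        unfolding c_def by (rule one_step[OF pos[OF k1p] pos[OF l] k1(2) h1 A2t])
      have lnle: "ln (norm t) \<le> ln (norm (A2 *\<^sub>R t))"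
        using t k2 by (auto simp: ln_mult)
      have "assoc_weight (M k2) t + ereal (real (Suc N) * ln (norm t))
          = (assoc_weight (M k2) t + ereal (real N * ln (norm t))) + ereal (ln (norm t))"
        by (simp add: algebra_simps add.assoc)
      also have "\<dots> \<le> (assoc_weight (M k1) (A2 *\<^sub>R t) + ereal B2) + ereal (ln (norm (A2 *\<^sub>R t)))"
        by (rule add_mono[OF h2[rule_format, OF t]]) (use lnle in simp)
      also have "\<dots> = (assoc_weight (M k1) (A2 *\<^sub>R t) + ereal (ln (norm (A2 *\<^sub>R t)))) + ereal B2"
        by (simp add: ac_simps)
      also have "\<dots> \<le> (assoc_weight (M l) (A1 *\<^sub>R (A2 *\<^sub>R t)) + ereal c) + ereal B2"
        using s1 by (intro add_right_mono)
      also have "\<dots> = assoc_weight (M l) ((A1 * A2) *\<^sub>R t) + ereal (B2 + c)"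
        proof -
        have "ereal c + ereal B2 = ereal (B2 + c)" by simp
        then show ?thesis by (simp only: add.assoc scaleR_scaleR)
      qed
      finally show "assoc_weight (M k2) t + ereal (real (Suc N) * ln (norm t))
             \<le> assoc_weight (M l) ((A1 * A2) *\<^sub>R t) + ereal (B2 + c)" .
    qed (use k1 k2 c0 in auto)
  qed
qed

theorem lemma3p3:
  fixes M :: "real \<Rightarrow> ('n::finite \<Rightarrow> nat) \<Rightarrow> real"
  assumes "weight_matrix M"
  shows
   "((\<forall>l>0. \<exists>k A. 0 < k \<and> k \<le> l \<and> A \<ge> 1 \<and>
        (\<forall>\<alpha> j. M k (mi_succ \<alpha> j) \<le> A ^ (mi_len \<alpha> + 1) * M l \<alpha>))
     \<longrightarrow> (\<forall>l>0. \<forall>N::nat. N \<ge> 1 \<longrightarrow> (\<exists>k A B. 0 < k \<and> k \<le> l \<and> A \<ge> 1 \<and> B \<ge> 1 \<and>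
        (\<forall>t::real^'n. t \<noteq> 0 \<longrightarrow>
           assoc_weight (M l) t + ereal (real N * ln (norm t))
             \<le> assoc_weight (M k) (A *\<^sub>R t) + ereal B))))
   \<and>
    ((\<forall>l>0. \<exists>k A. k \<ge> l \<and> A \<ge> 1 \<and>
        (\<forall>\<alpha> j. M l (mi_succ \<alpha> j) \<le> A ^ (mi_len \<alpha> + 1) * M k \<alpha>))
     \<longrightarrow> (\<forall>l>0. \<forall>N::nat. N \<ge> 1 \<longrightarrow> (\<exists>k A B. k \<ge> l \<and> A \<ge> 1 \<and> B \<ge> 1 \<and>
        (\<forall>t::real^'n. t \<noteq> 0 \<longrightarrow>
           assoc_weight (M k) t + ereal (real N * ln (norm t))
             \<le> assoc_weight (M l) (A *\<^sub>R t) + ereal B))))"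
  using iter_i[OF assms] iter_ii[OF assms] by blast

end
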